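(* In any run $R$ of algorithm $\mathcal{A}_{\mathrm{reg}}$, for all $op, op' \in C(R)$: if $op \rightarrow op'$ then $op \prec op'$.
   Context: $op \rightarrow op'$ means the response event of $op$ occurs before the invocation event of $op'$ in the history of $R$. System model: $n$ asynchronous, crash-prone processes with identities in $\{1,\ldots,n\}$. Each process $k$ is the unique writer of a reliable linearizable single-writer multi-reader Distributed Ledger Object (DLO) $L_k$, readable by all processes; its state is a finite sequence of records, initially empty, with operations $L_k.get()$ (returns the current sequence) and $L_k.append(r)$ (appends record $r$); every invocation by a correct process completes. Well-formedness: a process does not invoke $\mathrm{apply}$ before its previous invocation has finished. Validated object: given a predicate $\mathrm{valid}(\langle P,\prec\rangle, op, i)$ and a function $\mathrm{execute}(\langle P,\prec\rangle, op, i)$, whose first argument is a strictly partially ordered set of operations, $op$ an operation and $i$ its issuing process. Clients use $\mathrm{apply}(op,i)$, returning $(\mathit{ACK}, r)$ if $op$ is found valid and executed with result $r$, and $(\mathit{NACK},-)$ otherwise. The history of a run $R$ contains only operations for which $\mathrm{apply}$ returns $\mathit{ACK}$; $C(R)$ is the set of complete such operations. Algorithm $\mathcal{A}_{\mathrm{reg}}$ (code of $\mathrm{apply}(op,i)$ at process $i$): for $j=1,\ldots,n$ in order, set $G_j \leftarrow L_j.get()$, $T_j \leftarrow |G_j|$; set $ts \leftarrow (i,T_1,\ldots,T_n)$; set $P \leftarrow \{op' : \langle ts',op'\rangle \in \bigcup_j G_j\}$; if $\mathrm{valid}(\langle P,\prec\rangle, op, i)$ then $res \leftarrow \mathrm{execute}(\langle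 P,\prec\rangle, op,i)$, $L_i.append(\langle ts, op\rangle)$, return $(\mathit{ACK},res)$; otherwise return $(\mathit{NACK},-)$. The invocation event of a valid operation is the invocation of $L_1.get()$, its response event the completion of $L_i.append(\langle ts,op\rangle)$. $ts$ is the timestamp $ts(op)$. Order $\prec$: for $op,op' \in C(R)$ with $ts(op)=(i,T_1,\ldots,T_n)$, $ts(op')=(k,T'_1,\ldots,T'_n)$, $op \prec op'$ iff $T_i < T'_i$. *)

theory Defs
  imports Main
begin

text \<open>The linearizable ledgers
  L_1..L_n are modelled as atomic objects (each get/append is a single atomic step);
  a run is an infinite interleaving of atomic steps of processes (with stuttering steps,
  which models asynchrony and crashes: a crashed process simply takes no more steps).\<close>

type_synonym tstamp = "nat \<times> nat list"     \<comment> \<open>(i, [T_1, ..., T_n])\<close>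
type_synonym 'op recd = "tstamp \<times> 'op"

text \<open>Component T_j (1-based) of a timestamp vector.\<close>
definition comp :: "nat list \<Rightarrow> nat \<Rightarrow> nat" where
  "comp T j = T ! (j - 1)"

fun ts_prec :: "tstamp \<Rightarrow> tstamp \<Rightarrow> bool" where
  "ts_prec (i, T) (k, T') = (comp T i < comp T' i)"

definition prec_in :: "'op recd set \<Rightarrow> 'op \<Rightarrow> 'op \<Rightarrow> bool" where
  "prec_in recs op op' = (\<exists>ts ts'. (ts, op) \<in> recs \<and> (ts', op') \<in> recs \<and> ts_prec ts ts')"

datatype ('op, 'r) lstate =
    Idle
  | Reading 'op "'op recd list list"      \<comment> \<open>op being applied, G_1..G_m read so far\<close>
  | Appending 'op tstamp 'r               \<comment> \<open>valid: next step is L_i.append(ts,op)\<close>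

record ('op, 'r) config =
  ledger :: "nat \<Rightarrow> 'op recd list"
  loc    :: "nat \<Rightarrow> ('op, 'r) lstate"

definition after_read ::
  "nat \<Rightarrow> (('op set \<times> ('op \<Rightarrow> 'op \<Rightarrow> bool)) \<Rightarrow> 'op \<Rightarrow> nat \<Rightarrow> bool)
       \<Rightarrow> (('op set \<times> ('op \<Rightarrow> 'op \<Rightarrow> bool)) \<Rightarrow> 'op \<Rightarrow> nat \<Rightarrow> 'r)
       \<Rightarrow> nat \<Rightarrow> 'op \<Rightarrow> 'op recd list list \<Rightarrow> ('op, 'r) lstate" where
  "after_read n valid execute i op Gs =
     (if length Gs < n then Reading op Gs
      else (let ts = (i, map length Gs);
                recs = set (concat Gs);
                P = snd ` recs
            in if valid (P, prec_in recs) op i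
               then Appending op ts (execute (P, prec_in recs) op i)
               else Idle))"

text \<open>One atomic step of process i.  From Idle, the process invokes apply(op,i) for an
  arbitrary op, performing L_1.get(); then L_2.get(), ..., L_n.get(); then (if valid)
  L_i.append(ts,op).\<close>
definition pstep ::
  "nat \<Rightarrow> (('op set \<times> ('op \<Rightarrow> 'op \<Rightarrow> bool)) \<Rightarrow> 'op \<Rightarrow> nat \<Rightarrow> bool)
       \<Rightarrow> (('op set \<times> ('op \<Rightarrow> 'op \<Rightarrow> bool)) \<Rightarrow> 'op \<Rightarrow> nat \<Rightarrow> 'r)
       \<Rightarrow> nat \<Rightarrow> ('op, 'r) config \<Rightarrow> ('op, 'r) config \<Rightarrow> bool" where
  "pstep n valid execute i c c' =
     (case loc c i of
        Idle \<Rightarrow> (\<exists>op. c' = c\<lparr>loc := (loc c)(i := after_read n valid execute i op [ledger c 1])\<rparr>)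
      | Reading op Gs \<Rightarrow>
          c' = c\<lparr>loc := (loc c)(i := after_read n valid execute i op (Gs @ [ledger c (length Gs + 1)]))\<rparr>
      | Appending op ts r \<Rightarrow>
          c' = c\<lparr>ledger := (ledger c)(i := ledger c i @ [(ts, op)]), loc := (loc c)(i := Idle)\<rparr>)"

text \<open>A run: configurations cfg t and a schedule who t (None = no step).\<close>
definition is_run ::
  "nat \<Rightarrow> (('op set \<times> ('op \<Rightarrow> 'op \<Rightarrow> bool)) \<Rightarrow> 'op \<Rightarrow> nat \<Rightarrow> bool)
       \<Rightarrow> (('op set \<times> ('op \<Rightarrow> 'op \<Rightarrow> bool)) \<Rightarrow> 'op \<Rightarrow> nat \<Rightarrow> 'r)
       \<Rightarrow> (nat \<Rightarrow> ('op, 'r) config) \<Rightarrow> (nat \<Rightarrow> nat option) \<Rightarrow> bool" where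
  "is_run n valid execute cfg who =
     (1 \<le> n \<and>
      (\<forall>j. ledger (cfg 0) j = []) \<and> (\<forall>i. loc (cfg 0) i = Idle) \<and>
      (\<forall>t. case who t of
             None \<Rightarrow> cfg (Suc t) = cfg t
           | Some i \<Rightarrow> i \<in> {1..n} \<and> pstep n valid execute i (cfg t) (cfg (Suc t))))"

text \<open>A complete valid operation of the run, identified by its process i, the step s
  of its invocation (the L_1.get()) and the step e of its response (completion of
  L_i.append).  C(R) is the set of these triples.\<close>
definition complete_ops ::
  "(nat \<Rightarrow> ('op, 'r) config) \<Rightarrow> (nat \<Rightarrow> nat option) \<Rightarrow> (nat \<times> nat \<times> nat) set" where
  "complete_ops cfg who =
     {(i, s, e). s < e \<and>
        who s = Some i \<and> loc (cfg s) i = Idle \<and>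
        who e = Some i \<and> (\<exists>op ts r. loc (cfg e) i = Appending op ts r) \<and>
        (\<forall>t. s < t \<and> t < e \<longrightarrow> \<not> (who t = Some i \<and> loc (cfg t) i = Idle))}"

definition ts_of :: "(nat \<Rightarrow> ('op, 'r) config) \<Rightarrow> nat \<times> nat \<times> nat \<Rightarrow> tstamp" where
  "ts_of cfg o1 = (case o1 of (i, s, e) \<Rightarrow>
      (case loc (cfg e) i of Appending op ts r \<Rightarrow> ts | _ \<Rightarrow> undefined))"

definition real_time_before :: "nat \<times> nat \<times> nat \<Rightarrow> nat \<times> nat \<times> nat \<Rightarrow> bool" where
  "real_time_before o1 o2 = (snd (snd o1) < fst (snd o2))"

definition op_prec :: "(nat \<Rightarrow> ('op, 'r) config) \<Rightarrow> nat \<times> nat \<times> nat \<Rightarrow> nat \<times> nat \<times> nat \<Rightarrow> bool" where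
  "op_prec cfg o1 o2 = ts_prec (ts_of cfg o1) (ts_of cfg o2)"

end

theory Submission
  imports Defs
begin

lemma run_step:
  assumes "is_run n valid execute cfg who" "who t = Some i"
  shows "i \<in> {1..n} \<and> pstep n valid execute i (cfg t) (cfg (Suc t))"
proof -
  have "case who t of None \<Rightarrow> cfg (Suc t) = cfg t
           | Some i \<Rightarrow> i \<in> {1..n} \<and> pstep n valid execute i (cfg t) (cfg (Suc t))"
    using assms(1) unfolding is_run_def by blast
  then show ?thesis using assms(2) by simp
qed

lemma run_none:
  assumes "is_run n valid execute cfg who" "who t = None"
  shows "cfg (Suc t) = cfg t"
proof -
  have "case who t of None \<Rightarrow> cfg (Suc t) = cfg t
           | Some i \<Rightarrow> i \<in> {1..n} \<and> pstep n valid execute i (cfg t) (cfg (Suc t))"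
    using assms(1) unfolding is_run_def by blast
  then show ?thesis using assms(2) by simp
qed

lemma frame:
  assumes "is_run n valid execute cfg who" "who t \<noteq> Some j"
  shows "loc (cfg (Suc t)) j = loc (cfg t) j \<and> ledger (cfg (Suc t)) j = ledger (cfg t) j"
proof (cases "who t")
  case None
  then show ?thesis using run_none[OF assms(1)] by simp
next
  case (Some i)
  with assms have ij: "i \<noteq> j" by auto
  from run_step[OF assms(1) Some] have "pstep n valid execute i (cfg t) (cfg (Suc t))" by simp
  then show ?thesis using ij unfolding pstep_def
    by (auto split: lstate.splits)
qed

lemma ledger_mono_step:
  assumes "is_run n valid execute cfg who"
  shows "length (ledger (cfg t) j) \<le> length (ledger (cfg (Suc t)) j)"
proof (cases "who t = Some j")
  case True
  from run_step[OF assms True] have "pstep n valid execute j (cfg t) (cfg (Suc t))" by simp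
  then show ?thesis unfolding pstep_def by (auto split: lstate.splits)
next
  case False
  then show ?thesis using frame[OF assms False] by simp
qed

lemma ledger_mono:
  assumes "is_run n valid execute cfg who" "t \<le> t'"
  shows "length (ledger (cfg t) j) \<le> length (ledger (cfg t') j)"
  using assms(2)
proof (induction t' rule: dec_induct)
  case base then show ?case by simp
next
  case (step m)
  then show ?case using ledger_mono_step[OF assms(1), of m j] by simp
qed

lemma ar1:
  assumes "length Gs \<le> n" "k \<in> {1..n}" "k \<le> length Gs \<longrightarrow> Gs ! (k - 1) = L"
  shows "case after_read n valid execute k op Gs of Idle \<Rightarrow> True
     | Reading op' Gs' \<Rightarrow> length Gs' < n \<and> (k \<le> length Gs' \<longrightarrow> Gs' ! (k - 1) = L)
     | Appending op' ts r \<Rightarrow> fst ts = k \<and> length (snd ts) = n \<and> snd ts ! (k - 1) = length L"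
  using assms unfolding after_read_def Let_def by auto

lemma ar2:
  assumes "\<forall>j < length Gs. f j \<le> length (Gs ! j)"
  shows "case after_read n valid execute k op Gs of Idle \<Rightarrow> True
     | Reading op' Gs' \<Rightarrow> (\<forall>j < length Gs'. f j \<le> length (Gs' ! j))
     | Appending op' ts r \<Rightarrow> (\<forall>j < length (snd ts). f j \<le> snd ts ! j)"
  using assms unfolding after_read_def Let_def by auto

definition Inv :: "nat \<Rightarrow> ('op, 'r) config \<Rightarrow> nat \<Rightarrow> bool" where
  "Inv n c k = (case loc c k of Idle \<Rightarrow> True
     | Reading op Gs \<Rightarrow> k \<in> {1..n} \<and> length Gs < n \<and> (k \<le> length Gs \<longrightarrow> Gs ! (k - 1) = ledger c k)
     | Appending op ts r \<Rightarrow> k \<in> {1..n} \<and> fst ts = k \<and> length (snd ts) = n \<and> snd ts ! (k - 1) = length (ledger c k))"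

lemma inv_all:
  assumes run: "is_run n valid execute cfg who"
  shows "Inv n (cfg t) k"
proof (induction t)
  case 0
  then show ?case using run unfolding is_run_def Inv_def by simp
next
  case (Suc t)
  show ?case
  proof (cases "who t = Some k")
    case False
    have "loc (cfg (Suc t)) k = loc (cfg t) k" "ledger (cfg (Suc t)) k = ledger (cfg t) k"
      using frame[OF run False] by auto
    then show ?thesis using Suc unfolding Inv_def by (simp only:)
  next
    case True
    from run_step[OF run True] have kn: "k \<in> {1..n}"
      and ps: "pstep n valid execute k (cfg t) (cfg (Suc t))" by auto
    have n1: "1 \<le> n" using run unfolding is_run_def by simp
    show ?thesis
    proof (cases "loc (cfg t) k")
      case Idle
      with ps obtain op where c': "cfg (Suc t) = (cfg t)\<lparr>loc := (loc (cfg t))(k := after_read n valid execute k op [ledger (cfg t) 1])\<rparr>"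
        unfolding pstep_def by auto
      have "k \<le> length [ledger (cfg t) 1] \<longrightarrow> [ledger (cfg t) 1] ! (k - 1) = ledger (cfg t) k"
        using kn by auto
      from ar1[OF _ kn this, of valid execute op] n1
      show ?thesis unfolding Inv_def c' using kn by (auto split: lstate.splits)
    next
      case (Reading op Gs)
      with ps have c': "cfg (Suc t) = (cfg t)\<lparr>loc := (loc (cfg t))(k := after_read n valid execute k op (Gs @ [ledger (cfg t) (length Gs + 1)]))\<rparr>"
        unfolding pstep_def by auto
      from Suc Reading have h: "length Gs < n" "k \<le> length Gs \<longrightarrow> Gs ! (k - 1) = ledger (cfg t) k"
        unfolding Inv_def by auto
      have "k \<le> length (Gs @ [ledger (cfg t) (length Gs + 1)]) \<longrightarrow> (Gs @ [ledger (cfg t) (length Gs + 1)]) ! (k - 1) = ledger (cfg t) k"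
      proof
        assume kl: "k \<le> length (Gs @ [ledger (cfg t) (length Gs + 1)])"
        show "(Gs @ [ledger (cfg t) (length Gs + 1)]) ! (k - 1) = ledger (cfg t) k"
        proof (cases "k \<le> length Gs")
          case True then have "k - 1 < length Gs" using kn by auto
          then show ?thesis using h True by (simp add: nth_append)
        next
          case False
          then have "k = length Gs + 1" using kl by simp
          then show ?thesis by (simp add: nth_append)
        qed
      qed
      from ar1[OF _ kn this, of valid execute op] h
      show ?thesis unfolding Inv_def c' using kn by (auto split: lstate.splits)
    next
      case (Appending op ts r)
      with ps show ?thesis unfolding pstep_def Inv_def by auto
    qed
  qed
qed

definition Q :: "(nat \<Rightarrow> nat) \<Rightarrow> ('op, 'r) config \<Rightarrow> nat \<Rightarrow> bool" where
  "Q f c k = (case loc c k of Idle \<Rightarrow> True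
     | Reading op Gs \<Rightarrow> (\<forall>j < length Gs. f j \<le> length (Gs ! j))
     | Appending op ts r \<Rightarrow> (\<forall>j < length (snd ts). f j \<le> snd ts ! j))"

lemma lowerbound:
  assumes run: "is_run n valid execute cfg who" and ws: "who s = Some k" and ls: "loc (cfg s) k = Idle"
  shows "s < t \<Longrightarrow> (\<forall>t''. s < t'' \<and> t'' < t \<longrightarrow> \<not> (who t'' = Some k \<and> loc (cfg t'') k = Idle))
     \<Longrightarrow> Q (\<lambda>j. length (ledger (cfg s) (Suc j))) (cfg t) k"
proof (induction t)
  case 0 then show ?case by simp
next
  case (Suc t)
  let ?f = "\<lambda>j. length (ledger (cfg s) (Suc j))"
  show ?case
  proof (cases "t = s")
    case True
    from run_step[OF run ws] have ps: "pstep n valid execute k (cfg s) (cfg (Suc s))" by auto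
    with ls obtain op where c': "cfg (Suc s) = (cfg s)\<lparr>loc := (loc (cfg s))(k := after_read n valid execute k op [ledger (cfg s) 1])\<rparr>"
      unfolding pstep_def by auto
    have "\<forall>j < length [ledger (cfg s) 1]. ?f j \<le> length ([ledger (cfg s) 1] ! j)" by simp
    from ar2[OF this, of n valid execute k op] show ?thesis
      unfolding Q_def True c' by (auto split: lstate.splits)
  next
    case False
    with Suc.prems have st: "s < t" by simp
    have IH: "Q ?f (cfg t) k" using Suc st by auto
    show ?thesis
    proof (cases "who t = Some k")
      case False
      have "loc (cfg (Suc t)) k = loc (cfg t) k"
        using frame[OF run False] by auto
      then show ?thesis using IH unfolding Q_def by simp
    next
      case True
      from run_step[OF run True] have ps: "pstep n valid execute k (cfg t) (cfg (Suc t))" by auto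
      have notidle: "loc (cfg t) k \<noteq> Idle" using Suc.prems(2) st True by auto
      show ?thesis
      proof (cases "loc (cfg t) k")
        case Idle with notidle show ?thesis by simp
      next
        case (Reading op Gs)
        with ps have c': "cfg (Suc t) = (cfg t)\<lparr>loc := (loc (cfg t))(k := after_read n valid execute k op (Gs @ [ledger (cfg t) (length Gs + 1)]))\<rparr>"
          unfolding pstep_def by auto
        from IH Reading have h: "\<forall>j < length Gs. ?f j \<le> length (Gs ! j)" unfolding Q_def by simp
        have m: "?f (length Gs) \<le> length (ledger (cfg t) (length Gs + 1))"
          using ledger_mono[OF run, of s t] st by simp
        have "\<forall>j < length (Gs @ [ledger (cfg t) (length Gs + 1)]). ?f j \<le> length ((Gs @ [ledger (cfg t) (length Gs + 1)]) ! j)"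
          using h m by (auto simp: nth_append less_Suc_eq)
        from ar2[OF this, of n valid execute k op] show ?thesis
          unfolding Q_def c' by (auto split: lstate.splits)
      next
        case (Appending op ts r)
        with ps show ?thesis unfolding pstep_def Q_def by auto
      qed
    qed
  qed
qed

theorem mainTheorem2:
  fixes n :: nat
    and valid :: "('op set \<times> ('op \<Rightarrow> 'op \<Rightarrow> bool)) \<Rightarrow> 'op \<Rightarrow> nat \<Rightarrow> bool"
    and execute :: "('op set \<times> ('op \<Rightarrow> 'op \<Rightarrow> bool)) \<Rightarrow> 'op \<Rightarrow> nat \<Rightarrow> 'r"
    and cfg :: "nat \<Rightarrow> ('op, 'r) config"
    and who :: "nat \<Rightarrow> nat option"
  assumes "is_run n valid execute cfg who"
  shows "\<forall>o1 \<in> complete_ops cfg who. \<forall>o2 \<in> complete_ops cfg who.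
           real_time_before o1 o2 \<longrightarrow> op_prec cfg o1 o2"
proof (intro ballI impI)
  note run = assms
  fix o1 o2
  assume o1: "o1 \<in> complete_ops cfg who" and o2: "o2 \<in> complete_ops cfg who"
    and rt: "real_time_before o1 o2"
  obtain i s e where o1e: "o1 = (i, s, e)" by (cases o1) auto
  obtain k s' e' where o2e: "o2 = (k, s', e')" by (cases o2) auto
  from o1 o1e obtain op ts r where we: "who e = Some i" and le: "loc (cfg e) i = Appending op ts r"
    unfolding complete_ops_def by auto
  from o2 o2e have s'e': "s' < e'" and ws': "who s' = Some k" and ls': "loc (cfg s') k = Idle"
    and nid: "\<forall>t. s' < t \<and> t < e' \<longrightarrow> \<not> (who t = Some k \<and> loc (cfg t) k = Idle)"
    and ap': "\<exists>op ts r. loc (cfg e') k = Appending op ts r"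
    unfolding complete_ops_def by auto
  from ap' obtain op' ts' r' where le': "loc (cfg e') k = Appending op' ts' r'" by auto
  from rt o1e o2e have es': "e < s'" unfolding real_time_before_def by simp
  have I1: "Inv n (cfg e) i" by (rule inv_all[OF run])
  with le have in1: "i \<in> {1..n}" and fts: "fst ts = i" and lts: "length (snd ts) = n"
    and cts: "snd ts ! (i - 1) = length (ledger (cfg e) i)" unfolding Inv_def by auto
  have I2: "Inv n (cfg e') k" by (rule inv_all[OF run])
  with le' have fts': "fst ts' = k" and lts': "length (snd ts') = n" unfolding Inv_def by auto
  have Q2: "Q (\<lambda>j. length (ledger (cfg s') (Suc j))) (cfg e') k"
    using lowerbound[OF run ws' ls' s'e'] nid by blast
  with le' lts' in1 have lb: "length (ledger (cfg s') i) \<le> snd ts' ! (i - 1)"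
    unfolding Q_def by (auto dest: spec[of _ "i - 1"])
  from run_step[OF run we] le have "ledger (cfg (Suc e)) i = ledger (cfg e) i @ [(ts, op)]"
    unfolding pstep_def by auto
  hence "length (ledger (cfg e) i) < length (ledger (cfg (Suc e)) i)" by simp
  also have "\<dots> \<le> length (ledger (cfg s') i)" using ledger_mono[OF run, of "Suc e" s'] es' by simp
  finally have lt: "snd ts ! (i - 1) < snd ts' ! (i - 1)" using cts lb by simp
  have t1: "ts_of cfg o1 = ts" using o1e le unfolding ts_of_def by simp
  have t2: "ts_of cfg o2 = ts'" using o2e le' unfolding ts_of_def by simp
  obtain T where "ts = (i, T)" using fts by (cases ts) auto
  moreover obtain T' where "ts' = (k, T')" using fts' by (cases ts') auto
  ultimately show "op_prec cfg o1 o2" unfolding op_prec_def t1 t2 using lt by (simp add: comp_def)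
qed

end
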